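(* Let $t,d\in\mathbb{C}[[z]]$ with $t^2-4d$ having a simple zero at $z=0$, and let $\tilde X$ be the corresponding spectral curve. Then all objects of the groupoid $\widetilde{\mathrm{Conn}}(\tilde X)$ are isomorphic.
   Context: $\tilde X=\operatorname{Spf}\mathbb{C}[[\tilde z]]$ is the spectral curve $\xi^2-t(z)\xi+d(z)=0$ in $T^*\operatorname{Spf}\mathbb{C}[[z]]=\operatorname{Spf}\mathbb{C}[\xi][[z]]$, with coordinate $\tilde z=\sqrt{t^2-4d}$ and canonical $1$-form $\mu=\xi\,dz|_{\tilde X}$. $\widetilde{\mathrm{Conn}}(\tilde X)$ is the groupoid of pairs $(l,\delta)$ with $l$ a free rank-1 $\mathbb{C}[[\tilde z,\lambda]]$-module and $\delta:l\to\tilde z^{-1}l\,d\tilde z$ a $\mathbb{C}[[\lambda]]$-linear map with $\delta(fs)=f\delta s+\lambda s\,df$, residue $-\lambda/2$, and reduction mod $\lambda$ equal to $\mu$; morphisms are isomorphisms compatible with $\delta$. *)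

theory Defs
  imports "HOL-Computational_Algebra.Formal_Power_Series" "HOL-Algebra.Module"
begin

text \<open>The ring C[[zt,lam]] is modelled as C[[lam]][[zt]], i.e. the type complex fps fps:
  the outer variable is zt (the coordinate on the spectral curve), the inner one is lam.\<close>

definition Rzl :: "complex fps fps ring" where
  "Rzl = \<lparr>carrier = UNIV, monoid.mult = (*), one = 1, zero = 0, add = (+)\<rparr>"

definition zt :: "complex fps fps" where "zt = fps_X"

definition lam :: "complex fps fps" where "lam = fps_const fps_X"

definition lift_z :: "complex fps \<Rightarrow> complex fps fps" where
  "lift_z f = Abs_fps (\<lambda>n. fps_const (fps_nth f n))"

text \<open>Spectral curve xi^2 - t(z) xi + d(z) = 0 with coordinate zt = sqrt(t^2-4d) = 2 xi - t.
  zcoord t d : z as a power series in zt (z = D^{-1}(zt^2), D = t^2 - 4d);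
  xicoord t d : xi = (t(z) + zt)/2 as a power series in zt.\<close>
definition zcoord :: "complex fps \<Rightarrow> complex fps \<Rightarrow> complex fps" where
  "zcoord t d = fps_inv (t^2 - 4 * d) oo fps_X^2"

definition xicoord :: "complex fps \<Rightarrow> complex fps \<Rightarrow> complex fps" where
  "xicoord t d = fps_const (1/2) * ((t oo zcoord t d) + fps_X)"

text \<open>mu = xi dz |_Xt = mu_coeff t d * d zt.\<close>
definition mu_coeff :: "complex fps \<Rightarrow> complex fps \<Rightarrow> complex fps" where
  "mu_coeff t d = xicoord t d * fps_deriv (zcoord t d)"

text \<open>The target zt^{-1} l d zt is identified with l via
  omega \<mapsto> zt * (omega / d zt); accordingly delta is encoded by the map
  D = zt * delta / d zt : l \<rightarrow> l, and the Leibniz rule becomes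
  D (f s) = f D s + lam zt f' s.\<close>
definition is_tconn ::
  "complex fps \<Rightarrow> complex fps \<Rightarrow> (complex fps fps, 'm) module \<Rightarrow> ('m \<Rightarrow> 'm) \<Rightarrow> bool" where
  "is_tconn t d M D \<longleftrightarrow>
     module Rzl M
   \<and> (\<exists>s \<in> carrier M. bij_betw (\<lambda>r. r \<odot>\<^bsub>M\<^esub> s) UNIV (carrier M))
   \<and> D \<in> carrier M \<rightarrow> carrier M
   \<and> (\<forall>s \<in> carrier M. \<forall>s' \<in> carrier M. D (s \<oplus>\<^bsub>M\<^esub> s') = D s \<oplus>\<^bsub>M\<^esub> D s')
   \<and> (\<forall>c. \<forall>s \<in> carrier M. D (fps_const c \<odot>\<^bsub>M\<^esub> s) = fps_const c \<odot>\<^bsub>M\<^esub> D s)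
   \<and> (\<forall>f. \<forall>s \<in> carrier M.
        D (f \<odot>\<^bsub>M\<^esub> s) = f \<odot>\<^bsub>M\<^esub> D s \<oplus>\<^bsub>M\<^esub> (lam * zt * fps_deriv f) \<odot>\<^bsub>M\<^esub> s)
   \<and> (\<forall>s \<in> carrier M. \<exists>u \<in> carrier M.
        D s = (fps_const (fps_const (-1/2)) * lam) \<odot>\<^bsub>M\<^esub> s \<oplus>\<^bsub>M\<^esub> zt \<odot>\<^bsub>M\<^esub> u)
   \<and> (\<forall>s \<in> carrier M. \<exists>u \<in> carrier M.
        D s = lift_z (fps_X * mu_coeff t d) \<odot>\<^bsub>M\<^esub> s \<oplus>\<^bsub>M\<^esub> lam \<odot>\<^bsub>M\<^esub> u)"

definition tconn_iso ::
  "(complex fps fps, 'm) module \<Rightarrow> ('m \<Rightarrow> 'm) \<Rightarrow> (complex fps fps, 'n) module \<Rightarrow> ('n \<Rightarrow> 'n) \<Rightarrow> bool" where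
  "tconn_iso M D N E \<longleftrightarrow>
    (\<exists>\<phi>. bij_betw \<phi> (carrier M) (carrier N)
       \<and> (\<forall>s \<in> carrier M. \<forall>s' \<in> carrier M. \<phi> (s \<oplus>\<^bsub>M\<^esub> s') = \<phi> s \<oplus>\<^bsub>N\<^esub> \<phi> s')
       \<and> (\<forall>r. \<forall>s \<in> carrier M. \<phi> (r \<odot>\<^bsub>M\<^esub> s) = r \<odot>\<^bsub>N\<^esub> \<phi> s)
       \<and> (\<forall>s \<in> carrier M. \<phi> (D s) = E (\<phi> s)))"

end

theory Submission
  imports Defs
begin

fun gc :: "complex fps fps \<Rightarrow> nat \<Rightarrow> complex fps" where
  "gc h 0 = 1"
| "gc h (Suc n) = fps_const (1 / of_nat (Suc n)) * (\<Sum>i=0..n. fps_nth h i * gc h (n - i))"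

lemma ode_sol:
  fixes h :: "complex fps fps"
  shows "\<exists>g. fps_deriv g = h * g \<and> fps_nth g 0 = 1"
proof (intro exI conjI)
  show "fps_deriv (Abs_fps (gc h)) = h * Abs_fps (gc h)"
  proof (rule fps_ext)
    fix n
    have "fps_nth (fps_deriv (Abs_fps (gc h))) n = of_nat (Suc n) * gc h (Suc n)"
      by simp
    also have "\<dots> = (of_nat (Suc n) * fps_const (1 / of_nat (Suc n))) * (\<Sum>i=0..n. fps_nth h i * gc h (n - i))"
      by (simp only: gc.simps mult.assoc)
    also have "of_nat (Suc n) * fps_const (1 / of_nat (Suc n)) = (1 :: complex fps)"
      by (simp del: of_nat_Suc add: fps_of_nat[symmetric] fps_const_mult)
    finally show "fps_nth (fps_deriv (Abs_fps (gc h))) n = fps_nth (h * Abs_fps (gc h)) n"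
      by (simp add: fps_mult_nth)
  qed
  show "fps_nth (Abs_fps (gc h)) 0 = 1" by simp
qed

lemma ode_inv:
  fixes h g g2 :: "complex fps fps"
  assumes "fps_deriv g = h * g" "fps_nth g 0 = 1" "fps_deriv g2 = - h * g2" "fps_nth g2 0 = 1"
  shows "g * g2 = 1"
proof -
  have "fps_deriv (g * g2) = 0" using assms by (simp add: algebra_simps)
  then have "g * g2 = fps_const (fps_nth (g * g2) 0)" by (simp only: fps_deriv_eq_0_iff)
  then show ?thesis using assms by simp
qed

lemma X_shift:
  fixes f :: "complex fps"
  assumes "fps_nth f 0 = 0"
  shows "fps_X * fps_shift 1 f = f"
  using assms by (intro fps_ext) auto


lemma Rzl_simps: "carrier Rzl = UNIV" "a \<oplus>\<^bsub>Rzl\<^esub> b = a + b" "a \<otimes>\<^bsub>Rzl\<^esub> b = a * b" "\<one>\<^bsub>Rzl\<^esub> = 1"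
  by (simp_all add: Rzl_def)

lemma mod_add: "module Rzl M \<Longrightarrow> x \<in> carrier M \<Longrightarrow> (a + b) \<odot>\<^bsub>M\<^esub> x = a \<odot>\<^bsub>M\<^esub> x \<oplus>\<^bsub>M\<^esub> b \<odot>\<^bsub>M\<^esub> x"
  using module.smult_l_distr[of Rzl M a b x] by (simp add: Rzl_simps)

lemma mod_mult: "module Rzl M \<Longrightarrow> x \<in> carrier M \<Longrightarrow> (a * b) \<odot>\<^bsub>M\<^esub> x = a \<odot>\<^bsub>M\<^esub> (b \<odot>\<^bsub>M\<^esub> x)"
  using module.smult_assoc1[of Rzl M a b x] by (simp add: Rzl_simps)

lemma mod_closed: "module Rzl M \<Longrightarrow> x \<in> carrier M \<Longrightarrow> a \<odot>\<^bsub>M\<^esub> x \<in> carrier M"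
  using module.smult_closed[of Rzl M a x] by (simp add: Rzl_simps)

lemma tconn_gen:
  assumes "is_tconn t d M D"
  obtains s a where "module Rzl M" "s \<in> carrier M" "bij_betw (\<lambda>r. r \<odot>\<^bsub>M\<^esub> s) UNIV (carrier M)"
   "\<And>f. D (f \<odot>\<^bsub>M\<^esub> s) = (f * a + lam * zt * fps_deriv f) \<odot>\<^bsub>M\<^esub> s"
   "\<exists>r. a = fps_const (fps_const (-1/2)) * lam + zt * r"
   "\<exists>q. a = lift_z (fps_X * mu_coeff t d) + lam * q"
proof -
  note A = assms[unfolded is_tconn_def]
  have Mm: "module Rzl M" using A by blast
  obtain s where s: "s \<in> carrier M" and bij: "bij_betw (\<lambda>r. r \<odot>\<^bsub>M\<^esub> s) UNIV (carrier M)"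
    using A by blast
  have inj: "\<And>x y. x \<odot>\<^bsub>M\<^esub> s = y \<odot>\<^bsub>M\<^esub> s \<Longrightarrow> x = y"
    using bij_betw_imp_inj_on[OF bij] by (auto dest: inj_onD)
  have surj: "\<And>y. y \<in> carrier M \<Longrightarrow> \<exists>r. y = r \<odot>\<^bsub>M\<^esub> s"
    using bij_betw_imp_surj_on[OF bij] by auto
  have Ds: "D s \<in> carrier M" using A s by blast
  then obtain a where a: "D s = a \<odot>\<^bsub>M\<^esub> s" using surj by blast
  have L: "D (f \<odot>\<^bsub>M\<^esub> s) = (f * a + lam * zt * fps_deriv f) \<odot>\<^bsub>M\<^esub> s" for f
  proof -
    have "D (f \<odot>\<^bsub>M\<^esub> s) = f \<odot>\<^bsub>M\<^esub> D s \<oplus>\<^bsub>M\<^esub> (lam * zt * fps_deriv f) \<odot>\<^bsub>M\<^esub> s"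
      using A s by blast
    then show ?thesis using a by (simp add: mod_add[OF Mm s] mod_mult[OF Mm s])
  qed
  have R: "\<exists>r. a = fps_const (fps_const (-1/2)) * lam + zt * r"
  proof -
    obtain u where u: "u \<in> carrier M" and
      "D s = (fps_const (fps_const (-1/2)) * lam) \<odot>\<^bsub>M\<^esub> s \<oplus>\<^bsub>M\<^esub> zt \<odot>\<^bsub>M\<^esub> u"
      using A s by blast
    moreover obtain r where "u = r \<odot>\<^bsub>M\<^esub> s" using surj u by blast
    ultimately have "a \<odot>\<^bsub>M\<^esub> s = (fps_const (fps_const (-1/2)) * lam + zt * r) \<odot>\<^bsub>M\<^esub> s"
      using a by (simp add: mod_add[OF Mm s] mod_mult[OF Mm s])
    then show ?thesis using inj by blast
  qed
  have Q: "\<exists>q. a = lift_z (fps_X * mu_coeff t d) + lam * q"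
  proof -
    obtain u where u: "u \<in> carrier M" and
      "D s = lift_z (fps_X * mu_coeff t d) \<odot>\<^bsub>M\<^esub> s \<oplus>\<^bsub>M\<^esub> lam \<odot>\<^bsub>M\<^esub> u"
      using A s by blast
    moreover obtain r where "u = r \<odot>\<^bsub>M\<^esub> s" using surj u by blast
    ultimately have "a \<odot>\<^bsub>M\<^esub> s = (lift_z (fps_X * mu_coeff t d) + lam * r) \<odot>\<^bsub>M\<^esub> s"
      using a by (simp add: mod_add[OF Mm s] mod_mult[OF Mm s])
    then show ?thesis using inj by blast
  qed
  show ?thesis using that Mm s bij L R Q by blast
qed


lemma diff_factor:
  fixes c :: "complex fps fps"
  assumes "fps_nth c 0 = 0" "\<And>n. fps_nth (fps_nth c n) 0 = 0"
  shows "\<exists>h. c = lam * zt * h"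
proof
  let ?h = "Abs_fps (\<lambda>n. fps_shift 1 (fps_nth c (Suc n)))"
  show "c = lam * zt * ?h"
  proof (rule fps_ext)
    fix n
    show "fps_nth c n = fps_nth (lam * zt * ?h) n"
    proof (cases n)
      case 0 then show ?thesis using assms(1) by (simp add: lam_def zt_def mult.assoc)
    next
      case (Suc m)
      have "fps_nth (lam * zt * ?h) n = fps_X * fps_shift 1 (fps_nth c (Suc m))"
        using Suc by (simp add: lam_def zt_def mult.assoc)
      also have "\<dots> = fps_nth c (Suc m)" using X_shift assms(2) by blast
      finally show ?thesis using Suc by simp
    qed
  qed
qed

theorem lemma4p10:
  fixes t d :: "complex fps"
    and M :: "(complex fps fps, 'm) module" and D :: "'m \<Rightarrow> 'm"
    and N :: "(complex fps fps, 'n) module" and E :: "'n \<Rightarrow> 'n"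
  assumes "fps_nth (t^2 - 4 * d) 0 = 0" and "fps_nth (t^2 - 4 * d) 1 \<noteq> 0"
    and "is_tconn t d M D" and "is_tconn t d N E"
  shows "tconn_iso M D N E"
proof -
  obtain s a where Mm: "module Rzl M" and s: "s \<in> carrier M"
    and bs: "bij_betw (\<lambda>r. r \<odot>\<^bsub>M\<^esub> s) UNIV (carrier M)"
    and LD: "\<And>f. D (f \<odot>\<^bsub>M\<^esub> s) = (f * a + lam * zt * fps_deriv f) \<odot>\<^bsub>M\<^esub> s"
    and Ra: "\<exists>r. a = fps_const (fps_const (-1/2)) * lam + zt * r"
    and Qa: "\<exists>q. a = lift_z (fps_X * mu_coeff t d) + lam * q"
    using tconn_gen[OF assms(3)] by metis
  obtain e b where Nm: "module Rzl N" and e: "e \<in> carrier N"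
    and be: "bij_betw (\<lambda>r. r \<odot>\<^bsub>N\<^esub> e) UNIV (carrier N)"
    and LE: "\<And>f. E (f \<odot>\<^bsub>N\<^esub> e) = (f * b + lam * zt * fps_deriv f) \<odot>\<^bsub>N\<^esub> e"
    and Rb: "\<exists>r. b = fps_const (fps_const (-1/2)) * lam + zt * r"
    and Qb: "\<exists>q. b = lift_z (fps_X * mu_coeff t d) + lam * q"
    using tconn_gen[OF assms(4)] by metis
  obtain r1 r2 where r: "a - b = zt * (r1 - r2)"
  proof -
    obtain r1 where "a = fps_const (fps_const (-1/2)) * lam + zt * r1" using Ra by blast
    moreover obtain r2 where "b = fps_const (fps_const (-1/2)) * lam + zt * r2" using Rb by blast
    ultimately have "a - b = zt * (r1 - r2)" by (simp add: algebra_simps)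
    then show ?thesis using that by blast
  qed
  obtain q1 q2 where q: "a - b = lam * (q1 - q2)"
  proof -
    obtain r1 where "a = lift_z (fps_X * mu_coeff t d) + lam * r1" using Qa by blast
    moreover obtain r2 where "b = lift_z (fps_X * mu_coeff t d) + lam * r2" using Qb by blast
    ultimately have "a - b = lam * (r1 - r2)" by (simp add: algebra_simps)
    then show ?thesis using that by blast
  qed
  have c0: "fps_nth (a - b) 0 = 0" by (simp only: r) (simp add: zt_def)
  have cn: "fps_nth (fps_nth (a - b) n) 0 = 0" for n by (simp only: q) (simp add: lam_def)
  obtain h where h: "a - b = lam * zt * h" using diff_factor[OF c0 cn] by blast
  obtain g where g: "fps_deriv g = h * g" "fps_nth g 0 = 1" using ode_sol by blast
  obtain g2 where g2: "fps_deriv g2 = (- h) * g2" "fps_nth g2 0 = 1" using ode_sol by blast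
  have gg2: "g * g2 = 1" using ode_inv[OF g g2] .
  have ab: "a = b + lam * zt * h" using h by (simp add: algebra_simps)
  define \<iota> where "\<iota> = inv_into UNIV (\<lambda>r. r \<odot>\<^bsub>M\<^esub> s)"
  have injM: "\<And>x y. x \<odot>\<^bsub>M\<^esub> s = y \<odot>\<^bsub>M\<^esub> s \<Longrightarrow> x = y"
    using bij_betw_imp_inj_on[OF bs] by (auto dest: inj_onD)
  have injN: "\<And>x y. x \<odot>\<^bsub>N\<^esub> e = y \<odot>\<^bsub>N\<^esub> e \<Longrightarrow> x = y"
    using bij_betw_imp_inj_on[OF be] by (auto dest: inj_onD)
  have F1: "\<And>x. x \<in> carrier M \<Longrightarrow> \<iota> x \<odot>\<^bsub>M\<^esub> s = x"
    unfolding \<iota>_def using bij_betw_inv_into_right[OF bs] by blast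
  have F2: "\<And>r. \<iota> (r \<odot>\<^bsub>M\<^esub> s) = r"
    unfolding \<iota>_def using bij_betw_inv_into_left[OF bs] by blast
  have bi: "bij_betw \<iota> (carrier M) UNIV"
    unfolding \<iota>_def by (rule bij_betw_inv_into[OF bs])
  define \<phi> where "\<phi> = (\<lambda>x. (\<iota> x * g) \<odot>\<^bsub>N\<^esub> e)"
  show ?thesis
    unfolding tconn_iso_def
  proof (intro exI conjI ballI allI)
    have bg: "bij_betw (\<lambda>r. r * g) UNIV (UNIV :: complex fps fps set)"
      by (rule bij_betwI[where g = "\<lambda>r. r * g2"]) (auto simp: mult.assoc gg2 mult.commute[of g2 g])
    have "bij_betw ((\<lambda>r. r \<odot>\<^bsub>N\<^esub> e) \<circ> (\<lambda>r. r * g) \<circ> \<iota>) (carrier M) (carrier N)"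
      using bij_betw_trans[OF bi bij_betw_trans[OF bg be]] by (simp add: comp_assoc)
    then show "bij_betw \<phi> (carrier M) (carrier N)" by (simp add: \<phi>_def comp_def)
  next
    fix x y assume x: "x \<in> carrier M" and y: "y \<in> carrier M"
    have "x \<oplus>\<^bsub>M\<^esub> y = (\<iota> x + \<iota> y) \<odot>\<^bsub>M\<^esub> s"
      using F1 x y by (simp add: mod_add[OF Mm s])
    then have "\<iota> (x \<oplus>\<^bsub>M\<^esub> y) = \<iota> x + \<iota> y" using F2 by simp
    then show "\<phi> (x \<oplus>\<^bsub>M\<^esub> y) = \<phi> x \<oplus>\<^bsub>N\<^esub> \<phi> y"
      by (simp add: \<phi>_def distrib_right mod_add[OF Nm e])
  next
    fix r x assume x: "x \<in> carrier M"
    have "r \<odot>\<^bsub>M\<^esub> x = (r * \<iota> x) \<odot>\<^bsub>M\<^esub> s"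
      using F1 x by (simp add: mod_mult[OF Mm s])
    then have "\<iota> (r \<odot>\<^bsub>M\<^esub> x) = r * \<iota> x" using F2 by simp
    then show "\<phi> (r \<odot>\<^bsub>M\<^esub> x) = r \<odot>\<^bsub>N\<^esub> \<phi> x"
      by (simp add: \<phi>_def mult.assoc mod_mult[OF Nm e, of r "\<iota> x * g", symmetric])
  next
    fix x assume x: "x \<in> carrier M"
    define f where "f = \<iota> x"
    have xf: "x = f \<odot>\<^bsub>M\<^esub> s" using F1 x f_def by simp
    have "\<phi> (D x) = ((f * a + lam * zt * fps_deriv f) * g) \<odot>\<^bsub>N\<^esub> e"
      unfolding xf LD \<phi>_def F2 ..
    also have "(f * a + lam * zt * fps_deriv f) * g = (f * g) * b + lam * zt * fps_deriv (f * g)"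
      using g(1) ab by (simp add: algebra_simps)
    also have "((f * g) * b + lam * zt * fps_deriv (f * g)) \<odot>\<^bsub>N\<^esub> e = E (\<phi> x)"
      unfolding xf \<phi>_def F2 LE ..
    finally show "\<phi> (D x) = E (\<phi> x)" .
  qed
qed

end
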